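(* Let $p=11$ and let $0\le i\le 9$ with $i\ne5$. Then $F_i(\mathbb{Z}_{11})=(F(i)\bmod 11)+11\mathbb{Z}_{11}$, where $$F_i(x)=\sum_{m\ge0}\frac{\left(\omega(\phi)^i-(-1)^m\omega(\bar\phi)^i\right)\left(\log_{11}\frac{\phi}{\omega(\phi)}\right)^m}{m!\,\sqrt5}\,x^m\quad(x\in\mathbb{Z}_{11}).$$
   Context: $F(n)$ is the Fibonacci sequence ($F(0)=0,F(1)=1,F(n+2)=F(n+1)+F(n)$). Since $11\equiv1\pmod5$, the polynomial $x^2-x-1$ has two roots $\phi,\bar\phi\in\mathbb{Z}_{11}$; $\sqrt5:=2\phi-1$. For $x\in\mathbb{Z}_{11}\setminus11\mathbb{Z}_{11}$, $\omega(x)$ is the unique $10$th root of unity in $\mathbb{Z}_{11}$ congruent to $x$ modulo $11$. $\log_{11}y=\sum_{m\ge1}(-1)^{m+1}(y-1)^m/m$ is the $11$-adic logarithm. $F(i)\bmod 11$ denotes the least nonnegative residue. *)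

theory Defs
  imports Main "HOL-Number_Theory.Fib"
begin

text \<open>p-adic integers Z_p, represented as coherent sequences of residues:
  x n is the least nonnegative residue of x modulo p^n.\<close>

definition Zp :: "int \<Rightarrow> (nat \<Rightarrow> int) set" where
  "Zp p = {x. \<forall>n. x n = x (Suc n) mod p ^ n}"

definition zp_of_int :: "int \<Rightarrow> int \<Rightarrow> (nat \<Rightarrow> int)" where
  "zp_of_int p a = (\<lambda>n. a mod p ^ n)"

definition zp_add :: "int \<Rightarrow> (nat \<Rightarrow> int) \<Rightarrow> (nat \<Rightarrow> int) \<Rightarrow> (nat \<Rightarrow> int)" where
  "zp_add p x y = (\<lambda>n. (x n + y n) mod p ^ n)"

definition zp_neg :: "int \<Rightarrow> (nat \<Rightarrow> int) \<Rightarrow> (nat \<Rightarrow> int)" where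
  "zp_neg p x = (\<lambda>n. (- x n) mod p ^ n)"

definition zp_sub :: "int \<Rightarrow> (nat \<Rightarrow> int) \<Rightarrow> (nat \<Rightarrow> int) \<Rightarrow> (nat \<Rightarrow> int)" where
  "zp_sub p x y = zp_add p x (zp_neg p y)"

definition zp_mult :: "int \<Rightarrow> (nat \<Rightarrow> int) \<Rightarrow> (nat \<Rightarrow> int) \<Rightarrow> (nat \<Rightarrow> int)" where
  "zp_mult p x y = (\<lambda>n. (x n * y n) mod p ^ n)"

definition zp_pow :: "int \<Rightarrow> (nat \<Rightarrow> int) \<Rightarrow> nat \<Rightarrow> (nat \<Rightarrow> int)" where
  "zp_pow p x k = (\<lambda>n. (x n ^ k) mod p ^ n)"

definition zp_sum :: "int \<Rightarrow> ('a \<Rightarrow> nat \<Rightarrow> int) \<Rightarrow> 'a set \<Rightarrow> (nat \<Rightarrow> int)" where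
  "zp_sum p f A = (\<lambda>n. (\<Sum>a\<in>A. f a n) mod p ^ n)"

definition zp_lim :: "(nat \<Rightarrow> nat \<Rightarrow> int) \<Rightarrow> (nat \<Rightarrow> int) \<Rightarrow> bool" where
  "zp_lim s z = (\<forall>n. \<exists>K. \<forall>k\<ge>K. s k n = z n)"

definition zp_sums :: "int \<Rightarrow> (nat \<Rightarrow> nat \<Rightarrow> int) \<Rightarrow> (nat \<Rightarrow> int) \<Rightarrow> bool" where
  "zp_sums p f z = zp_lim (\<lambda>K. zp_sum p f {..<K}) z"

text \<open>Exact quotient a / b (in Q_p), used only where it lies in Z_p.\<close>
definition zp_div :: "int \<Rightarrow> (nat \<Rightarrow> int) \<Rightarrow> (nat \<Rightarrow> int) \<Rightarrow> (nat \<Rightarrow> int)" where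
  "zp_div p a b = (THE y. y \<in> Zp p \<and> zp_mult p b y = a)"

definition teich :: "int \<Rightarrow> (nat \<Rightarrow> int) \<Rightarrow> (nat \<Rightarrow> int)" where
  "teich p x = (THE w. w \<in> Zp p \<and> zp_pow p w (nat (p - 1)) = zp_of_int p 1 \<and> w 1 = x 1)"

text \<open>p-adic logarithm: sum over m \<ge> 1 of (-1)^(m+1) (y-1)^m / m (index k = m - 1).\<close>
definition zp_log :: "int \<Rightarrow> (nat \<Rightarrow> int) \<Rightarrow> (nat \<Rightarrow> int)" where
  "zp_log p y = (THE z. zp_sums p (\<lambda>k. zp_div p
      (zp_mult p (zp_of_int p ((-1) ^ k)) (zp_pow p (zp_sub p y (zp_of_int p 1)) (Suc k)))
      (zp_of_int p (int (Suc k)))) z)"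

text \<open>m-th term of F_i(x), with phi, phi' the two roots of x^2-x-1, sqrt5 = 2 phi - 1.\<close>
definition fib_term :: "int \<Rightarrow> nat \<Rightarrow> (nat \<Rightarrow> int) \<Rightarrow> (nat \<Rightarrow> int) \<Rightarrow> (nat \<Rightarrow> int) \<Rightarrow> nat \<Rightarrow> (nat \<Rightarrow> int)" where
  "fib_term p i \<phi> \<phi>' x m =
     zp_mult p
       (zp_div p
         (zp_mult p
           (zp_sub p (zp_pow p (teich p \<phi>) i)
                     (zp_mult p (zp_of_int p ((-1) ^ m)) (zp_pow p (teich p \<phi>') i)))
           (zp_pow p (zp_log p (zp_div p \<phi> (teich p \<phi>))) m))
         (zp_mult p (zp_of_int p (int (fact m)))
                    (zp_sub p (zp_mult p (zp_of_int p 2) \<phi>) (zp_of_int p 1))))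
       (zp_pow p x m)"

end

theory Submission
  imports Defs "HOL-Number_Theory.Number_Theory"
begin

lemma p11n: "prime (11::nat)"
proof -
  have "m = 1 \<or> m = 11" if "m dvd 11" for m :: nat
  proof -
    have "m \<le> 11" using that by (rule dvd_imp_le) simp
    then have "m < 12" by simp
    then have "m \<in> {0,1,2,3,4,5,6,7,8,9,10,11}" by (auto simp: numeral_eq_Suc less_Suc_eq)
    then show ?thesis using that by auto
  qed
  then show ?thesis by (simp add: prime_nat_iff)
qed

lemma p11: "prime (11::int)" using p11n by (simp add: prime_int_numeral_eq)

lemma zp_step: "x \<in> Zp p \<Longrightarrow> x n = x (Suc n) mod p^n"
  unfolding Zp_def mem_Collect_eq by (erule allE)

lemma zp_range: "x \<in> Zp 11 \<Longrightarrow> 0 \<le> x n \<and> x n < 11^n"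
proof -
  assume "x \<in> Zp 11"
  from zp_step[OF this, of n] have h: "x n = x (Suc n) mod 11^n" .
  have "(0::int) < 11^n" by simp
  then have "0 \<le> x (Suc n) mod 11^n \<and> x (Suc n) mod 11^n < 11^n" by simp
  then show ?thesis using h by simp
qed

lemma zp_modself: "x \<in> Zp 11 \<Longrightarrow> x n mod 11^n = x n"
  using zp_range[of x n] by simp

lemma zp_coh: assumes "x \<in> Zp 11" "n \<le> m" shows "x m mod 11^n = x n"
  using assms(2)
proof (induction m rule: dec_induct)
  case base then show ?case using zp_modself[OF assms(1)] by simp
next
  case (step m)
  have "x m = x (Suc m) mod 11^m" using zp_step[OF assms(1)] .
  moreover have "(11::int)^n dvd 11^m" using step(1) by (simp add: le_imp_power_dvd)
  ultimately show ?case using step(3) by (simp add: mod_mod_cancel)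
qed

lemma zp_cong: "x \<in> Zp 11 \<Longrightarrow> n \<le> m \<Longrightarrow> [x m = x n] (mod 11^n)"
  using zp_coh[of x n m] zp_modself[of x n] by (simp add: cong_def)

lemma zp_ext: assumes "x \<in> Zp 11" "y \<in> Zp 11" "\<And>n. [x n = y n] (mod 11^n)" shows "x = y"
proof
  fix n show "x n = y n" using assms(3)[of n] zp_modself[OF assms(1), of n] zp_modself[OF assms(2), of n]
    by (simp add: cong_def)
qed

lemma zp_inI: assumes "\<And>n. [f (Suc n) = f n] (mod 11^n)" shows "(\<lambda>n. f n mod 11^n) \<in> Zp 11"
  unfolding Zp_def
proof (clarify)
  fix n
  have "(11::int)^n dvd 11^Suc n" by simp
  then have "f (Suc n) mod 11 ^ Suc n mod 11 ^ n = f (Suc n) mod 11^n" by (simp add: mod_mod_cancel)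
  also have "\<dots> = f n mod 11^n" using assms[of n] by (simp add: cong_def)
  finally show "f n mod 11 ^ n = f (Suc n) mod 11 ^ Suc n mod 11 ^ n" by simp
qed

lemma zp_cong_Suc: "x \<in> Zp 11 \<Longrightarrow> [x (Suc n) = x n] (mod 11^n)"
  by (rule zp_cong) auto

lemma of_int_in[simp]: "zp_of_int 11 a \<in> Zp 11"
  unfolding zp_of_int_def using zp_inI[of "\<lambda>n. a"] by simp

lemma add_in[simp]: "x \<in> Zp 11 \<Longrightarrow> y \<in> Zp 11 \<Longrightarrow> zp_add 11 x y \<in> Zp 11"
  unfolding zp_add_def by (rule zp_inI[of "\<lambda>n. x n + y n"]) (intro cong_add zp_cong_Suc)

lemma neg_in[simp]: "x \<in> Zp 11 \<Longrightarrow> zp_neg 11 x \<in> Zp 11"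
  unfolding zp_neg_def by (rule zp_inI[of "\<lambda>n. - x n"]) (intro cong_minus_minus_iff[THEN iffD2] zp_cong_Suc)

lemma sub_in[simp]: "x \<in> Zp 11 \<Longrightarrow> y \<in> Zp 11 \<Longrightarrow> zp_sub 11 x y \<in> Zp 11"
  unfolding zp_sub_def by simp

lemma mult_in[simp]: "x \<in> Zp 11 \<Longrightarrow> y \<in> Zp 11 \<Longrightarrow> zp_mult 11 x y \<in> Zp 11"
  unfolding zp_mult_def by (rule zp_inI[of "\<lambda>n. x n * y n"]) (intro cong_mult zp_cong_Suc)

lemma pow_in[simp]: "x \<in> Zp 11 \<Longrightarrow> zp_pow 11 x k \<in> Zp 11"
  unfolding zp_pow_def by (rule zp_inI[of "\<lambda>n. x n ^ k"]) (intro cong_pow zp_cong_Suc)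

lemma lv_of_int: "zp_of_int 11 a n = a mod 11^n" by (simp add: zp_of_int_def)
lemma lv_add: "zp_add 11 x y n = (x n + y n) mod 11^n" by (simp add: zp_add_def)
lemma lv_sub: "zp_sub 11 x y n = (x n - y n) mod 11^n"
  by (simp add: zp_sub_def zp_add_def zp_neg_def mod_simps)
lemma lv_mult: "zp_mult 11 x y n = (x n * y n) mod 11^n" by (simp add: zp_mult_def)
lemma lv_pow: "zp_pow 11 x k n = (x n ^ k) mod 11^n" by (simp add: zp_pow_def)

lemmas lv = lv_of_int lv_add lv_sub lv_mult lv_pow


lemma zp_memI: assumes "\<And>n. x n mod 11^n = x n" "\<And>n. [x (Suc n) = x n] (mod 11^n)"
  shows "x \<in> Zp 11"
  unfolding Zp_def mem_Collect_eq
proof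
  fix n
  have "x (Suc n) mod 11^n = x n mod 11^n" using assms(2)[of n] by (simp add: cong_def)
  then show "x n = x (Suc n) mod 11 ^ n" using assms(1)[of n] by simp
qed

lemma zp_eq_of_cong: "x \<in> Zp 11 \<Longrightarrow> y \<in> Zp 11 \<Longrightarrow> [x n = y n] (mod 11^n) \<Longrightarrow> x n = y n"
  using zp_modself[of x n] zp_modself[of y n] by (simp add: cong_def)

lemma zp_lv1: "x \<in> Zp 11 \<Longrightarrow> 1 \<le> n \<Longrightarrow> [x n = x 1] (mod 11)"
  using zp_cong[of x 1 n] by simp

lemma cop11: "\<not> 11 dvd (a::int) \<Longrightarrow> coprime a (11^n)"
proof -
  assume h: "\<not> 11 dvd a"
  have "coprime 11 a" using prime_imp_coprime[OF p11 h] .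
  then have "coprime a 11" by (simp add: coprime_commute)
  then show ?thesis by simp
qed

lemma dvd11_mult: "(11::int) dvd a * b \<longleftrightarrow> 11 dvd a \<or> 11 dvd b"
  using p11 by (simp add: prime_dvd_mult_iff)

lemma dvd11_pow: "(11::int) dvd a ^ k \<Longrightarrow> 11 dvd a"
  using p11 prime_dvd_power by blast

lemma pow_dvd_cancel: "(11::int)^n dvd a * b \<Longrightarrow> \<not> 11 dvd b \<Longrightarrow> 11^n dvd a"
  using cop11[of b n] by (metis coprime_commute coprime_dvd_mult_left_iff)

lemma unit_inv:
  assumes s: "s \<in> Zp 11" and nd: "\<not> 11 dvd s 1"
  obtains t where "t \<in> Zp 11" "\<And>n. [s n * t n = 1] (mod 11^n)"
proof -
  have nds: "\<not> 11 dvd s n" if "n \<ge> 1" for n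
    using zp_lv1[OF s that] nd by (simp add: cong_dvd_iff)
  have cop: "coprime (s n) (11^n)" for n
  proof (cases "n = 0")
    case True then show ?thesis by simp
  next
    case False then show ?thesis using nds[of n] cop11[of "s n" n] by simp
  qed
  define t where "t n = (SOME w. [s n * w = 1] (mod 11^n)) mod 11^n" for n
  have inv: "[s n * t n = 1] (mod 11^n)" for n
  proof -
    have "\<exists>w. [s n * w = 1] (mod 11^n)" using cop[of n] by (rule cong_solve_coprime_int)
    then have "[s n * (SOME w. [s n * w = 1] (mod 11^n)) = 1] (mod 11^n)" by (rule someI_ex)
    then show ?thesis unfolding t_def by (simp add: cong_def mod_simps)
  qed
  have "t \<in> Zp 11"
  proof (rule zp_memI)
    fix n show "t n mod 11^n = t n" by (simp add: t_def)
  next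
    fix n
    have "[s (Suc n) = s n] (mod 11^n)" using zp_cong_Suc[OF s] .
    then have "[s n * t (Suc n) = s (Suc n) * t (Suc n)] (mod 11^n)"
      by (simp add: cong_mult cong_sym)
    moreover have "[s (Suc n) * t (Suc n) = 1] (mod 11^n)"
      using inv[of "Suc n"] by (rule cong_dvd_modulus) (simp add: le_imp_power_dvd)
    ultimately have "[s n * t (Suc n) = s n * t n] (mod 11^n)"
      using inv[of n] by (meson cong_sym cong_trans)
    then show "[t (Suc n) = t n] (mod 11^n)"
      using cop[of n] cong_mult_lcancel by blast
  qed
  then show ?thesis using that inv by blast
qed

lemma pow_cancel_aux:
  "(11::int)^(k+N) dvd g * d \<Longrightarrow> \<not> 11^N dvd g \<Longrightarrow> 11^(k+1) dvd d"
proof (induction N arbitrary: g)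
  case 0 then show ?case by simp
next
  case (Suc N)
  show ?case
  proof (cases "11 dvd g")
    case False
    have "11^(k + Suc N) dvd d" using Suc.prems(1) False pow_dvd_cancel[of "k + Suc N" d g]
      by (simp add: mult.commute)
    then show ?thesis by (rule dvd_trans[rotated]) (simp add: le_imp_power_dvd)
  next
    case True
    then obtain g' where g: "g = 11 * g'" by blast
    have "\<not> 11^N dvd g'" using Suc.prems(2) g by simp
    moreover have "11^(k+N) dvd g' * d" using Suc.prems(1) g by (simp add: mult.assoc)
    ultimately show ?thesis using Suc.IH by blast
  qed
qed

lemma zp_cancel:
  assumes b: "b \<in> Zp 11" and y1: "y1 \<in> Zp 11" and y2: "y2 \<in> Zp 11" and bN: "b N \<noteq> 0"
    and eq: "\<And>n. (b n * y1 n) mod 11^n = (b n * y2 n) mod 11^n"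
  shows "y1 = y2"
proof
  fix n
  let ?M = "n + N"
  have "[b ?M * y1 ?M = b ?M * y2 ?M] (mod 11^?M)" using eq by (simp add: cong_def)
  then have "11^?M dvd b ?M * (y1 ?M - y2 ?M)"
    by (simp add: cong_iff_dvd_diff right_diff_distrib)
  moreover have "\<not> 11^N dvd b ?M"
  proof
    assume "11^N dvd b ?M"
    then have "b ?M mod 11^N = 0" by simp
    then show False using zp_coh[OF b, of N ?M] bN by simp
  qed
  ultimately have "11^(n+1) dvd y1 ?M - y2 ?M" using pow_cancel_aux by blast
  then have "[y1 ?M = y2 ?M] (mod 11^n)"
    by (metis cong_iff_dvd_diff dvd_trans le_add1 le_imp_power_dvd)
  then have "y1 ?M mod 11^n = y2 ?M mod 11^n" by (simp add: cong_def)
  then show "y1 n = y2 n" using zp_coh[OF y1, of n ?M] zp_coh[OF y2, of n ?M] by simp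
qed

lemma div_eq:
  assumes b: "b \<in> Zp 11" and y: "y \<in> Zp 11" and bN: "b N \<noteq> 0" and a: "zp_mult 11 b y = a"
  shows "zp_div 11 a b = y"
  unfolding zp_div_def
proof (rule the_equality)
  show "y \<in> Zp 11 \<and> zp_mult 11 b y = a" using y a by simp
next
  fix y' assume h: "y' \<in> Zp 11 \<and> zp_mult 11 b y' = a"
  then have "zp_mult 11 b y' = zp_mult 11 b y" using a by simp
  then have "\<And>n. (b n * y' n) mod 11^n = (b n * y n) mod 11^n"
    by (metis lv_mult)
  then show "y' = y" using zp_cancel[OF b _ y bN] h by blast
qed

lemma div11:
  assumes x: "x \<in> Zp 11" and xh: "x h = 0"
  obtains y where "y \<in> Zp 11" "\<And>n. x n = (11^h * y n) mod 11^n"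
proof -
  have dv: "(11::int)^h dvd x (n + h)" for n
  proof -
    have "x (n+h) mod 11^h = x h" by (rule zp_coh[OF x]) simp
    then show ?thesis using xh by (simp add: dvd_eq_mod_eq_0)
  qed
  define y where "y n = (x (n+h) div 11^h) mod 11^n" for n
  have key: "x (n+h) = 11^h * (x (n+h) div 11^h)" for n using dv[of n] by simp
  have "y \<in> Zp 11"
  proof (rule zp_memI)
    fix n show "y n mod 11^n = y n" by (simp add: y_def)
  next
    fix n
    let ?q = "x (n+h) div 11^h" and ?q' = "x (Suc n+h) div 11^h"
    have "x (n+h) = x (Suc n + h) mod 11^(n+h)" using zp_coh[OF x, of "n+h" "Suc n + h"] by simp
    also have "\<dots> = (11^h * ?q') mod (11^h * 11^n)" using key[of "Suc n"] by (simp add: power_add mult.commute)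
    also have "\<dots> = 11^h * (?q' mod 11^n)" by (rule mod_mult_mult1)
    finally have "11^h * ?q = 11^h * (?q' mod 11^n)" using key[of n] by simp
    then have "?q = ?q' mod 11^n" by simp
    moreover have "?q' mod 11^Suc n mod 11^n = ?q' mod 11^n"
      by (rule mod_mod_cancel) (simp add: le_imp_power_dvd)
    ultimately show "[y (Suc n) = y n] (mod 11^n)" unfolding y_def cong_def by simp
  qed
  moreover have "x n = (11^h * y n) mod 11^n" for n
  proof -
    have "(11^h * y n) mod 11^n = (11^h * (x (n+h) div 11^h)) mod 11^n" by (simp add: y_def mod_simps)
    also have "\<dots> = x (n+h) mod 11^n" using key[of n] by simp
    also have "\<dots> = x n" by (rule zp_coh[OF x]) simp
    finally show ?thesis by simp
  qed
  ultimately show ?thesis using that by blast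
qed


lemma euler11: assumes "\<not> 11 dvd (a::int)" "n \<ge> 1"
  shows "[a ^ (10 * 11^(n-1)) = 1] (mod 11^n)"
proof -
  have r: "residues ((11::int)^n)" unfolding residues_def using assms(2)
    by (simp add: one_less_power)
  have "[a ^ totient (nat (11^n)) = 1] (mod 11^n)"
    using residues.euler_theorem[OF r cop11[OF assms(1)]] .
  moreover have "nat ((11::int)^n) = 11^n" by (simp add: nat_power_eq)
  moreover have "totient ((11::nat)^n) = 10 * 11^(n-1)"
    using totient_prime_power[OF p11n, of n] assms(2) by simp
  ultimately show ?thesis by simp
qed

lemma fermat11: "[(a::int) ^ 11 = a] (mod 11)"
proof (cases "11 dvd a")
  case True
  then have "[a = 0] (mod 11)" by (simp add: cong_0_iff)
  then have "[a^11 = 0^11] (mod 11)" by (rule cong_pow)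
  then have "[a^11 = 0] (mod 11)" by simp
  then show ?thesis using \<open>[a = 0] (mod 11)\<close> cong_sym cong_trans by blast
next
  case False
  then have "[a ^ 10 = 1] (mod 11)" using euler11[of a 1] by simp
  then have "[a ^ 10 * a = 1 * a] (mod 11)" by (rule cong_scalar_right)
  then show ?thesis by (simp add: power_Suc2[symmetric] del: power_Suc)
qed

lemma fermat_iter: "[(a::int) ^ (11^k) = a] (mod 11)"
proof (induction k)
  case 0 then show ?case by simp
next
  case (Suc k)
  have "a ^ (11 ^ Suc k) = (a ^ (11^k)) ^ 11" by (simp add: power_mult[symmetric] mult.commute)
  moreover have "[(a ^ (11^k)) ^ 11 = a ^ 11] (mod 11)" using Suc.IH by (rule cong_pow)
  ultimately show ?case using fermat11 by (metis cong_trans)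
qed

lemma teich_lv_unique:
  assumes a: "[(a::int)^10 = 1] (mod 11^n)" and b: "[b^10 = 1] (mod 11^n)" and ab: "[a = b] (mod 11)"
  shows "[a = b] (mod 11^n)"
proof (cases "n = 0")
  case True then show ?thesis by simp
next
  case False
  have a1: "[a^10 = 1] (mod 11)" by (rule cong_dvd_modulus[OF a]) (use False in \<open>simp add: dvd_power\<close>)
  have nda: "\<not> 11 dvd a"
  proof
    assume h: "11 dvd a"
    have "a dvd a^10" by (rule dvd_power) simp
    then have "11 dvd a^10" using h by (rule dvd_trans[rotated])
    then show False using a1 by (simp add: cong_dvd_iff)
  qed
  define S where "S = (\<Sum>i<10. b ^ (10 - Suc i) * a ^ i)"
  have diff: "a^10 - b^10 = (a - b) * S" unfolding S_def by (rule power_diff_sumr2)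
  have "[a^10 = b^10] (mod 11^n)" using a b by (meson cong_sym cong_trans)
  then have dv: "11^n dvd (a - b) * S" using diff by (simp add: cong_iff_dvd_diff)
  have "[S = (\<Sum>i<(10::nat). a ^ 9)] (mod 11)" unfolding S_def
  proof (rule cong_sum)
    fix i :: nat assume "i \<in> {..<10}"
    then have i: "i < 10" by simp
    have "[b ^ (10 - Suc i) = a ^ (10 - Suc i)] (mod 11)" using ab by (simp add: cong_pow cong_sym)
    then have "[b ^ (10 - Suc i) * a ^ i = a ^ (10 - Suc i) * a ^ i] (mod 11)" by (rule cong_scalar_right)
    moreover have "a ^ (10 - Suc i) * a ^ i = a ^ 9" using i by (simp add: power_add[symmetric])
    ultimately show "[b ^ (10 - Suc i) * a ^ i = a ^ 9] (mod 11)" by simp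
  qed
  moreover have "\<not> 11 dvd (\<Sum>i<(10::nat). a ^ 9)"
  proof
    assume "11 dvd (\<Sum>i<(10::nat). a ^ 9)"
    then have "11 dvd 10 * a^9" by simp
    then show False using nda dvd11_mult[of 10 "a^9"] dvd11_pow[of a 9] by simp
  qed
  ultimately have "\<not> 11 dvd S" by (simp add: cong_dvd_iff)
  then have "11^n dvd a - b" using pow_dvd_cancel dv by blast
  then show ?thesis by (simp add: cong_iff_dvd_diff)
qed

lemma teich_props:
  assumes x: "x \<in> Zp 11" and nd: "\<not> 11 dvd x 1"
  shows "teich 11 x \<in> Zp 11" "\<And>n. teich 11 x n = x n ^ (11^(n-1)) mod 11^n"
    "teich 11 x 1 = x 1" "\<And>n. [teich 11 x n ^ 10 = 1] (mod 11^n)"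
proof -
  define w where "w n = x n ^ (11^(n-1)) mod 11^n" for n
  have ndn: "\<not> 11 dvd x n" if "n \<ge> 1" for n
    using zp_lv1[OF x that] nd by (simp add: cong_dvd_iff)
  have wp: "[w n ^ 10 = 1] (mod 11^n)" for n
  proof (cases "n = 0")
    case True then show ?thesis by simp
  next
    case False
    have "[w n ^ 10 = (x n ^ (11^(n-1))) ^ 10] (mod 11^n)" unfolding w_def cong_def by (simp add: mod_simps)
    moreover have "(x n ^ (11^(n-1))) ^ 10 = x n ^ (10 * 11^(n-1))" by (simp add: power_mult[symmetric] mult.commute)
    moreover have "[x n ^ (10 * 11^(n-1)) = 1] (mod 11^n)" using euler11[OF ndn] False by simp
    ultimately show ?thesis by (metis cong_trans)
  qed
  have w11: "[w n = x 1] (mod 11)" if "n \<ge> 1" for n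
  proof -
    have "[w n = x n ^ (11^(n-1))] (mod 11)" unfolding w_def
      using that by (simp add: cong_def mod_mod_cancel dvd_power)
    moreover have "[x n ^ (11^(n-1)) = x n] (mod 11)" by (rule fermat_iter)
    ultimately show ?thesis using zp_lv1[OF x that] by (meson cong_trans)
  qed
  have wZ: "w \<in> Zp 11"
  proof (rule zp_memI)
    fix n show "w n mod 11^n = w n" by (simp add: w_def)
  next
    fix n
    show "[w (Suc n) = w n] (mod 11^n)"
    proof (cases "n = 0")
      case True then show ?thesis by simp
    next
      case False
      have "[w (Suc n) ^ 10 = 1] (mod 11^n)" using wp[of "Suc n"] by (rule cong_dvd_modulus) (simp add: le_imp_power_dvd)
      moreover have "[w (Suc n) = w n] (mod 11)"
      proof -
        have "[w (Suc n) = x 1] (mod 11)" using w11[of "Suc n"] by simp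
        moreover have "[w n = x 1] (mod 11)" using w11[of n] False by simp
        ultimately show ?thesis using cong_sym cong_trans by blast
      qed
      ultimately show ?thesis using teich_lv_unique wp[of n] by blast
    qed
  qed
  have w1: "w 1 = x 1" using zp_modself[OF x, of 1] by (simp add: w_def)
  have wpow: "zp_pow 11 w 10 = zp_of_int 11 1"
  proof
    fix n show "zp_pow 11 w 10 n = zp_of_int 11 1 n" using wp[of n] unfolding lv cong_def .
  qed
  have "teich 11 x = w"
    unfolding teich_def
  proof (rule the_equality)
    show "w \<in> Zp 11 \<and> zp_pow 11 w (nat (11 - 1)) = zp_of_int 11 1 \<and> w 1 = x 1"
      using wZ wpow w1 by simp
  next
    fix w' assume h: "w' \<in> Zp 11 \<and> zp_pow 11 w' (nat (11 - 1)) = zp_of_int 11 1 \<and> w' 1 = x 1"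
    show "w' = w"
    proof (rule zp_ext[OF _ wZ])
      show "w' \<in> Zp 11" using h by simp
      fix n
      have "zp_pow 11 w' 10 n = zp_of_int 11 1 n" using h by simp
      then have p': "[w' n ^ 10 = 1] (mod 11^n)" by (simp add: lv cong_def)
      show "[w' n = w n] (mod 11^n)"
      proof (cases "n = 0")
        case True then show ?thesis by simp
      next
        case False
        have "[w' n = w' 1] (mod 11)" using zp_lv1[of w' n] h False by simp
        moreover have "[w n = x 1] (mod 11)" using w11[of n] False by simp
        ultimately have "[w' n = w n] (mod 11)" using h cong_sym cong_trans by metis
        then show ?thesis using teich_lv_unique p' wp[of n] by blast
      qed
    qed
  qed
  then show "teich 11 x \<in> Zp 11" "\<And>n. teich 11 x n = x n ^ (11^(n-1)) mod 11^n"
    "teich 11 x 1 = x 1" "\<And>n. [teich 11 x n ^ 10 = 1] (mod 11^n)"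
    using wZ w1 wp unfolding w_def by simp_all
qed


lemma sums_unique: "zp_sums p f z1 \<Longrightarrow> zp_sums p f z2 \<Longrightarrow> z1 = z2"
  unfolding zp_sums_def zp_lim_def
proof
  fix n assume h1: "\<forall>n. \<exists>K. \<forall>k\<ge>K. zp_sum p f {..<k} n = z1 n"
    and h2: "\<forall>n. \<exists>K. \<forall>k\<ge>K. zp_sum p f {..<k} n = z2 n"
  obtain K1 where k1: "\<forall>k\<ge>K1. zp_sum p f {..<k} n = z1 n" using h1 by blast
  obtain K2 where k2: "\<forall>k\<ge>K2. zp_sum p f {..<k} n = z2 n" using h2 by blast
  show "z1 n = z2 n" using k1[rule_format, of "max K1 K2"] k2[rule_format, of "max K1 K2"] by simp
qed

lemma tail_sum:
  assumes "\<And>k. k \<ge> B \<Longrightarrow> f k mod (m::int) = 0" "K \<ge> (B::nat)"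
  shows "(\<Sum>k<K. f k) mod m = (\<Sum>k<B. f k) mod m"
proof -
  have "(\<Sum>k<K. f k) mod m = (\<Sum>k<K. f k mod m) mod m" by (simp add: mod_simps)
  also have "(\<Sum>k<K. f k mod m) = (\<Sum>k<B. f k mod m)"
  proof (rule sum.mono_neutral_right)
    show "finite {..<K}" by simp
    show "{..<B} \<subseteq> {..<K}" using assms(2) by auto
    show "\<forall>i\<in>{..<K} - {..<B}. f i mod m = 0" using assms(1) by auto
  qed
  also have "(\<Sum>k<B. f k mod m) mod m = (\<Sum>k<B. f k) mod m" by (simp add: mod_simps)
  finally show ?thesis .
qed

lemma sums_exists:
  fixes f :: "nat \<Rightarrow> nat \<Rightarrow> int" and B :: "nat \<Rightarrow> nat"
  assumes "\<And>n k. k \<ge> B n \<Longrightarrow> f k n mod 11^n = 0"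
  shows "zp_sums 11 f (\<lambda>n. (\<Sum>k<B n. f k n) mod 11^n)"
  unfolding zp_sums_def zp_lim_def zp_sum_def
proof
  fix n show "\<exists>K. \<forall>k\<ge>K. (\<Sum>a\<in>{..<k}. f a n) mod 11 ^ n = (\<Sum>k<B n. f k n) mod 11 ^ n"
  proof (rule exI[of _ "B n"], intro allI impI)
    fix k assume k: "B n \<le> k"
    have "\<And>j. j \<ge> B n \<Longrightarrow> f j n mod 11^n = 0" using assms by blast
    from tail_sum[of "B n" "\<lambda>k. f k n" "11^n" k, OF this k]
    show "(\<Sum>a\<in>{..<k}. f a n) mod 11 ^ n = (\<Sum>k<B n. f k n) mod 11 ^ n" .
  qed
qed

lemma sums_limit_in:
  fixes f :: "nat \<Rightarrow> nat \<Rightarrow> int" and B :: "nat \<Rightarrow> nat"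
  assumes "\<And>n k. k \<ge> B n \<Longrightarrow> f k n mod 11^n = 0" "\<And>k. f k \<in> Zp 11"
  shows "(\<lambda>n. (\<Sum>k<B n. f k n) mod 11^n) \<in> Zp 11"
proof (rule zp_inI)
  fix n
  let ?K = "max (B n) (B (Suc n))"
  have "(\<Sum>k<?K. f k (Suc n)) mod 11^Suc n = (\<Sum>k<B (Suc n). f k (Suc n)) mod 11^Suc n"
  proof (rule tail_sum[of "B (Suc n)" "\<lambda>k. f k (Suc n)"])
    show "\<And>k. B (Suc n) \<le> k \<Longrightarrow> f k (Suc n) mod 11 ^ Suc n = 0" using assms(1) by blast
  qed simp
  then have "(\<Sum>k<B (Suc n). f k (Suc n)) mod 11^Suc n = (\<Sum>k<?K. f k (Suc n)) mod 11^Suc n" by (rule sym)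
  then have "[(\<Sum>k<B (Suc n). f k (Suc n)) = (\<Sum>k<?K. f k (Suc n))] (mod 11^n)"
    unfolding cong_def[symmetric] by (rule cong_dvd_modulus) (simp add: le_imp_power_dvd)
  moreover have "[(\<Sum>k<?K. f k (Suc n)) = (\<Sum>k<?K. f k n)] (mod 11^n)"
    by (rule cong_sum) (use assms(2) zp_cong_Suc in blast)
  moreover have "(\<Sum>k<?K. f k n) mod 11^n = (\<Sum>k<B n. f k n) mod 11^n"
  proof (rule tail_sum[of "B n" "\<lambda>k. f k n"])
    show "\<And>k. B n \<le> k \<Longrightarrow> f k n mod 11 ^ n = 0" using assms(1) by blast
  qed simp
  ultimately show "[(\<Sum>k<B (Suc n). f k (Suc n)) = (\<Sum>k<B n. f k n)] (mod 11^n)"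
    unfolding cong_def by simp
qed

lemma pow11_ge: "10 * e + 1 \<le> (11::int)^e"
proof (induction e)
  case 0 then show ?case by simp
next
  case (Suc e) then show ?case by simp
qed

lemma decomp11:
  assumes "(c::int) > 0"
  obtains e q where "c = 11^e * q" "\<not> 11 dvd q" "11^e \<le> c"
proof -
  let ?e = "multiplicity 11 c"
  have d: "11^?e dvd c" by (rule multiplicity_dvd)
  have nu: "\<not> is_unit (11::int)" by simp
  have "\<not> 11 dvd c div 11^?e" using multiplicity_decompose[OF _ nu, of c] assms by simp
  moreover have "c = 11^?e * (c div 11^?e)" using d by simp
  moreover have "11^?e \<le> c" using d assms by (simp add: zdvd_imp_le)
  ultimately show ?thesis using that by blast
qed

lemma e_bound: "(11::int)^e \<le> int k + 1 \<Longrightarrow> 10 * e \<le> k"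
  using pow11_ge[of e] by linarith

lemma div_witness:
  assumes s: "s \<in> Zp 11" and s1: "\<not> 11 dvd s 1" and c: "c = 11^e * q" and q: "\<not> 11 dvd q"
    and a: "a \<in> Zp 11" and y': "y' \<in> Zp 11" and ay: "\<And>n. [a n = 11^e * y' n] (mod 11^n)"
  obtains t where "t \<in> Zp 11" "\<And>n. [q * s n * t n = 1] (mod 11^n)"
    "zp_div 11 a (zp_mult 11 (zp_of_int 11 c) s) = zp_mult 11 y' t"
proof -
  let ?s2 = "zp_mult 11 (zp_of_int 11 q) s"
  have s2: "?s2 \<in> Zp 11" using s by simp
  have "\<not> 11 dvd ?s2 1"
  proof
    assume "11 dvd ?s2 1"
    then have "11 dvd (q mod 11 * s 1) mod 11" by (simp add: lv)
    then have "11 dvd q * s 1" by (simp add: mod_simps dvd_eq_mod_eq_0)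
    then show False using q s1 dvd11_mult by blast
  qed
  then obtain t where t: "t \<in> Zp 11" and ti: "\<And>n. [?s2 n * t n = 1] (mod 11^n)"
    using unit_inv[OF s2] by blast
  have ti': "[q * s n * t n = 1] (mod 11^n)" for n
  proof -
    have "[?s2 n * t n = q * s n * t n] (mod 11^n)" by (simp add: lv cong_def mod_simps)
    then show ?thesis using ti[of n] by (meson cong_sym cong_trans)
  qed
  let ?b = "zp_mult 11 (zp_of_int 11 c) s"
  have b: "?b \<in> Zp 11" using s by simp
  have bN: "?b (Suc e) \<noteq> 0"
  proof
    assume "?b (Suc e) = 0"
    then have "11^Suc e dvd c * s (Suc e)" by (simp add: lv mod_simps dvd_eq_mod_eq_0)
    then have "11 * 11^e dvd 11^e * (q * s (Suc e))" using c by (simp add: mult.assoc)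
    then have "11 dvd q * s (Suc e)" by (simp add: mult.commute[of 11])
    moreover have "\<not> 11 dvd s (Suc e)" using zp_lv1[OF s, of "Suc e"] s1 by (simp add: cong_dvd_iff)
    ultimately show False using q dvd11_mult by blast
  qed
  have eq: "zp_mult 11 ?b (zp_mult 11 y' t) = a"
  proof
    fix n
    have "[zp_mult 11 ?b (zp_mult 11 y' t) n = c * s n * (y' n * t n)] (mod 11^n)"
      by (simp add: lv cong_def mod_simps)
    also have "c * s n * (y' n * t n) = 11^e * y' n * (q * s n * t n)" using c by (simp add: algebra_simps)
    also have "[\<dots> = 11^e * y' n * 1] (mod 11^n)" using ti'[of n] by (rule cong_scalar_left)
    also have "[11^e * y' n * 1 = a n] (mod 11^n)" using ay[of n] by (simp add: cong_sym)
    finally show "zp_mult 11 ?b (zp_mult 11 y' t) n = a n"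
      using zp_eq_of_cong[of "zp_mult 11 ?b (zp_mult 11 y' t)" a n] a b y' t by simp
  qed
  have "zp_div 11 a ?b = zp_mult 11 y' t" by (rule div_eq[OF b _ bN eq]) (use y' t in simp)
  then show ?thesis using that t ti' by blast
qed


lemma cong_zero_big: "x \<in> Zp 11 \<Longrightarrow> [x n = 11^j * r] (mod 11^n) \<Longrightarrow> n \<le> j \<Longrightarrow> x n = 0"
proof -
  assume x: "x \<in> Zp 11" and c: "[x n = 11^j * r] (mod 11^n)" and nj: "n \<le> j"
  have "(11::int)^n dvd 11^j * r" using nj by (simp add: le_imp_power_dvd)
  then have "[11^j * r = 0] (mod 11^n)" by (simp add: cong_0_iff)
  then have "[x n = 0] (mod 11^n)" by (rule cong_trans[OF c])
  then show "x n = 0" using zp_modself[OF x, of n] by (simp add: cong_def)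
qed

lemma cong_dvd_small: "[(a::int) = 11^j * r] (mod 11^n) \<Longrightarrow> j \<le> n \<Longrightarrow> 11^j dvd a"
proof -
  assume c: "[a = 11^j * r] (mod 11^n)" and jn: "j \<le> n"
  have "[a = 11^j * r] (mod 11^j)" using c by (rule cong_dvd_modulus) (simp add: le_imp_power_dvd jn)
  then have "[a = 0] (mod 11^j)" by (simp add: cong_def)
  then show ?thesis by (simp add: cong_0_iff)
qed

lemma of_int_mult1: "zp_of_int 11 c = zp_mult 11 (zp_of_int 11 c) (zp_of_int 11 1)"
proof
  fix n show "zp_of_int 11 c n = zp_mult 11 (zp_of_int 11 c) (zp_of_int 11 1) n"
    by (simp add: lv mod_simps)
qed

lemma log_props:
  assumes u: "u \<in> Zp 11" and u1: "u 1 = 1" and u2: "u 2 \<noteq> 1"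
  obtains l where "l \<in> Zp 11" "\<not> 11 dvd l 1" "\<And>n. zp_log 11 u n = (11 * l n) mod 11^n"
proof -
  define d where "d = zp_sub 11 u (zp_of_int 11 1)"
  have d: "d \<in> Zp 11" unfolding d_def using u by simp
  have d1: "d 1 = 0" unfolding d_def lv using u1 by simp
  obtain w where w: "w \<in> Zp 11" and dw: "\<And>n. d n = (11^1 * w n) mod 11^n"
    using div11[OF d d1] by blast
  have w1: "\<not> 11 dvd w 1"
  proof
    assume "11 dvd w 1"
    moreover have "w 2 mod 11 = w 1" using zp_coh[OF w, of 1 2] by simp
    ultimately have "11 dvd w 2" by (simp add: dvd_eq_mod_eq_0)
    then obtain r where "w 2 = 11 * r" by blast
    then have "11 * w 2 = 121 * r" by simp
    then have "121 dvd 11 * w 2" by simp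
    then have "d 2 = 0" using dw[of 2] by simp
    then have "(u 2 - 1) mod 121 = 0" unfolding d_def lv by simp
    moreover have "0 \<le> u 2" "u 2 < 121" using zp_range[OF u, of 2] by auto
    ultimately obtain r where r: "u 2 - 1 = 121 * r" "0 \<le> u 2" "u 2 < 121" by (auto simp: mod_eq_0_iff_dvd elim!: dvdE)
    then have "r = 0" by linarith
    then show False using r(1) u2 by simp
  qed
  define T where "T k = zp_div 11 (zp_mult 11 (zp_of_int 11 ((-1)^k)) (zp_pow 11 d (Suc k))) (zp_of_int 11 (int (Suc k)))" for k
  have Tk: "\<exists>j t. 10 * j \<le> k \<and> T k \<in> Zp 11 \<and>
      (\<forall>n. [T k n = 11^(Suc k - j) * ((-1)^k * w n ^ Suc k * t n)] (mod 11^n)) \<and>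
      (k = 0 \<longrightarrow> j = 0 \<and> (\<forall>n. [t n = 1] (mod 11^n)))" for k
  proof -
    obtain e q where c: "int (Suc k) = 11^e * q" and q: "\<not> 11 dvd q" and le: "11^e \<le> int (Suc k)"
      using decomp11[of "int (Suc k)"] by auto
    have ek: "10 * e \<le> k" using e_bound[of e k] le by simp
    have ek1: "e \<le> Suc k" using ek by simp
    let ?a = "zp_mult 11 (zp_of_int 11 ((-1)^k)) (zp_pow 11 d (Suc k))"
    let ?y = "zp_mult 11 (zp_of_int 11 ((-1)^k * 11^(Suc k - e))) (zp_pow 11 w (Suc k))"
    have a: "?a \<in> Zp 11" using d by simp
    have y: "?y \<in> Zp 11" using w by simp
    have ay: "[?a n = 11^e * ?y n] (mod 11^n)" for n
    proof -
      have "[?a n = (-1)^k * d n ^ Suc k] (mod 11^n)" by (simp add: lv cong_def mod_simps)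
      also have "[(-1)^k * d n ^ Suc k = (-1)^k * (11 * w n) ^ Suc k] (mod 11^n)"
        by (rule cong_scalar_left, rule cong_pow) (simp add: dw cong_def)
      also have "(-1)^k * (11 * w n) ^ Suc k = 11^e * ((-1)^k * 11^(Suc k - e) * w n ^ Suc k)"
      proof -
        have "(11::int)^e * 11^(Suc k - e) = 11 ^ Suc k" using ek1 by (simp add: power_add[symmetric])
        then show ?thesis by (simp add: power_mult_distrib algebra_simps)
      qed
      also have "[11^e * ((-1)^k * 11^(Suc k - e) * w n ^ Suc k) = 11^e * ?y n] (mod 11^n)"
        by (rule cong_scalar_left) (simp add: lv cong_def mod_simps)
      finally show ?thesis .
    qed
    have s: "zp_of_int 11 1 \<in> Zp 11" by simp
    have s1: "\<not> 11 dvd zp_of_int 11 1 1" by (simp add: lv)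
    obtain t where t: "t \<in> Zp 11" and ti: "\<And>n. [q * zp_of_int 11 1 n * t n = 1] (mod 11^n)"
      and dv: "zp_div 11 ?a (zp_mult 11 (zp_of_int 11 (int (Suc k))) (zp_of_int 11 1)) = zp_mult 11 ?y t"
      using div_witness[OF s s1 c q a y ay] by blast
    have TT: "T k = zp_mult 11 ?y t" unfolding T_def using dv of_int_mult1 by metis
    have TZ: "T k \<in> Zp 11" using TT y t by simp
    have cg: "[T k n = 11^(Suc k - e) * ((-1)^k * w n ^ Suc k * t n)] (mod 11^n)" for n
      unfolding TT lv cong_def by (simp add: mod_simps del: power_Suc) (simp add: mult_ac)
    have k0: "k = 0 \<longrightarrow> e = 0 \<and> (\<forall>n. [t n = 1] (mod 11^n))"
    proof
      assume k: "k = 0"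
      then have e0: "e = 0" using ek by simp
      then have q1: "q = 1" using c k by simp
      show "e = 0 \<and> (\<forall>n. [t n = 1] (mod 11^n))"
      proof (intro conjI allI e0)
        fix n
        have "[q * zp_of_int 11 1 n * t n = t n] (mod 11^n)" using q1 by (simp add: lv cong_def mod_simps)
        then show "[t n = 1] (mod 11^n)" using ti[of n] by (meson cong_sym cong_trans)
      qed
    qed
    show ?thesis using ek TZ cg k0 by blast
  qed
  have TZ: "T k \<in> Zp 11" for k using Tk by blast
  have Tbig: "T k n mod 11^n = 0" if "2 * n \<le> k" for k n
  proof -
    obtain j t where j: "10 * j \<le> k" and Z: "T k \<in> Zp 11"
      and cg: "\<forall>n. [T k n = 11^(Suc k - j) * ((-1)^k * w n ^ Suc k * t n)] (mod 11^n)"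
      using Tk[of k] by blast
    have "n \<le> Suc k - j" using j that by linarith
    then have "T k n = 0" using cong_zero_big[OF Z cg[rule_format, of n]] by simp
    then show ?thesis by simp
  qed
  have T1: "T k 1 = 0" for k
  proof -
    obtain j t where j: "10 * j \<le> k" and Z: "T k \<in> Zp 11"
      and cg: "\<forall>n. [T k n = 11^(Suc k - j) * ((-1)^k * w n ^ Suc k * t n)] (mod 11^n)"
      using Tk[of k] by blast
    have "1 \<le> Suc k - j" using j by linarith
    then show "T k 1 = 0" using cong_zero_big[OF Z cg[rule_format, of 1]] by simp
  qed
  have T2: "[T k 2 = 0] (mod 121)" if "k \<ge> 1" for k
  proof -
    obtain j t where j: "10 * j \<le> k" and Z: "T k \<in> Zp 11"
      and cg: "\<forall>n. [T k n = 11^(Suc k - j) * ((-1)^k * w n ^ Suc k * t n)] (mod 11^n)"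
      using Tk[of k] by blast
    have "2 \<le> Suc k - j" using j that by linarith
    then have "T k 2 = 0" using cong_zero_big[OF Z cg[rule_format, of 2]] by simp
    then show ?thesis by simp
  qed
  have T0: "[T 0 n = 11 * w n] (mod 11^n)" for n
  proof -
    obtain j t where Z: "T 0 \<in> Zp 11"
      and cg: "\<forall>n. [T 0 n = 11^(Suc 0 - j) * ((-1)^0 * w n ^ Suc 0 * t n)] (mod 11^n)"
      and j0: "j = 0" and t1: "\<forall>n. [t n = 1] (mod 11^n)"
      using Tk[of 0] by blast
    have "[T 0 n = 11 * w n * t n] (mod 11^n)" using cg j0 by (simp add: mult.assoc)
    also have "[11 * w n * t n = 11 * w n * 1] (mod 11^n)" using t1 by (blast intro: cong_scalar_left)
    finally show ?thesis by simp
  qed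
  define Lv where "Lv n = (\<Sum>k<2*n. T k n) mod 11^n" for n
  have sums: "zp_sums 11 T Lv"
    unfolding Lv_def by (rule sums_exists) (use Tbig in auto)
  have LvZ: "Lv \<in> Zp 11"
    unfolding Lv_def by (rule sums_limit_in) (use Tbig TZ in auto)
  have logeq: "zp_log 11 u = Lv"
    unfolding zp_log_def
  proof (rule the_equality)
    show "zp_sums 11 (\<lambda>k. zp_div 11 (zp_mult 11 (zp_of_int 11 ((- 1) ^ k)) (zp_pow 11 (zp_sub 11 u (zp_of_int 11 1)) (Suc k)))
      (zp_of_int 11 (int (Suc k)))) Lv"
      using sums unfolding T_def d_def .
  next
    fix z assume "zp_sums 11 (\<lambda>k. zp_div 11 (zp_mult 11 (zp_of_int 11 ((- 1) ^ k)) (zp_pow 11 (zp_sub 11 u (zp_of_int 11 1)) (Suc k)))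
      (zp_of_int 11 (int (Suc k)))) z"
    then have "zp_sums 11 T z" unfolding T_def d_def .
    then show "z = Lv" using sums sums_unique by blast
  qed
  have Lv1: "Lv 1 = 0" unfolding Lv_def using T1 by simp
  obtain l where l: "l \<in> Zp 11" and Ll: "\<And>n. Lv n = (11^1 * l n) mod 11^n"
    using div11[OF LvZ Lv1] by blast
  have "[(\<Sum>k<4. T k 2) = (\<Sum>k<(4::nat). if k = 0 then T 0 2 else 0)] (mod 121)"
  proof (rule cong_sum)
    fix k :: nat assume "k \<in> {..<4}"
    show "[T k 2 = (if k = 0 then T 0 2 else 0)] (mod 121)"
      using T2[of k] by (cases "k = 0") auto
  qed
  then have "[Lv 2 = T 0 2] (mod 121)" unfolding Lv_def by (simp add: cong_def)
  then have "[Lv 2 = 11 * w 2] (mod 121)" using T0[of 2] by (simp add: cong_trans)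
  then have "[11 * l 2 = 11 * w 2] (mod 11 * 11)" using Ll[of 2] by (simp add: cong_def)
  then have "11 * 11 dvd 11 * (l 2 - w 2)" by (simp add: cong_iff_dvd_diff right_diff_distrib)
  then have "11 dvd l 2 - w 2" by (subst (asm) dvd_mult_cancel_left) simp_all
  then have "[l 2 = w 2] (mod 11)" by (simp add: cong_iff_dvd_diff)
  then have "l 1 = w 1" using zp_coh[OF l, of 1 2] zp_coh[OF w, of 1 2] by (simp add: cong_def)
  then have "\<not> 11 dvd l 1" using w1 by simp
  then show ?thesis using that l Ll logeq by simp
qed


definition vfact :: "nat \<Rightarrow> nat" where "vfact m = multiplicity (11::nat) (fact m)"

lemma pe11: "prime_elem (11::nat)" using p11n by simp

lemma vfact_Suc: "vfact (Suc m) = vfact m + multiplicity (11::nat) (Suc m)"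
proof -
  have "fact (Suc m) = Suc m * (fact m :: nat)" by simp
  then have "multiplicity (11::nat) (fact (Suc m)) = multiplicity 11 (Suc m) + multiplicity 11 (fact m :: nat)"
    using prime_elem_multiplicity_mult_distrib[OF pe11, of "Suc m" "fact m"] by simp
  then show ?thesis unfolding vfact_def by simp
qed

lemma vfact_block: "b \<le> 10 \<Longrightarrow> vfact (11 * a + b) = vfact (11 * a)"
proof (induction b)
  case 0 then show ?case by simp
next
  case (Suc b)
  have "\<not> 11 dvd Suc (11 * a + b)" using Suc.prems by presburger
  then have "multiplicity (11::nat) (Suc (11 * a + b)) = 0" by (rule not_dvd_imp_multiplicity_0)
  then show ?case using Suc vfact_Suc[of "11 * a + b"] by simp
qed

lemma vfact_11: "vfact (11 * a) = a + vfact a"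
proof (induction a)
  case 0 then show ?case by (simp add: vfact_def)
next
  case (Suc a)
  have "11 * Suc a = Suc (11 * a + 10)" by simp
  then have "vfact (11 * Suc a) = vfact (11 * a + 10) + multiplicity (11::nat) (11 * Suc a)"
    using vfact_Suc[of "11 * a + 10"] by simp
  also have "vfact (11 * a + 10) = vfact (11 * a)" by (rule vfact_block) simp
  also have "multiplicity (11::nat) (11 * Suc a) = Suc (multiplicity 11 (Suc a))"
    by (rule multiplicity_times_same) simp_all
  finally show ?case using Suc.IH vfact_Suc[of a] by simp
qed

lemma vfact_bound: "10 * vfact m \<le> m"
proof (induction m rule: less_induct)
  case (less m)
  show ?case
  proof (cases "m = 0")
    case True then show ?thesis by (simp add: vfact_def)
  next
    case False
    let ?a = "m div 11" and ?b = "m mod 11"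
    have m: "m = 11 * ?a + ?b" by simp
    have "vfact m = vfact (11 * ?a)" using vfact_block[of ?b ?a] m by simp
    also have "\<dots> = ?a + vfact ?a" by (rule vfact_11)
    finally have v: "vfact m = ?a + vfact ?a" .
    have "?a < m" using False by simp
    then have "10 * vfact ?a \<le> ?a" by (rule less.IH)
    then show ?thesis using v by linarith
  qed
qed

lemma fact_decomp:
  obtains Q where "int (fact m) = 11^vfact m * Q" "\<not> 11 dvd Q"
proof -
  have d: "(11::nat)^vfact m dvd fact m" unfolding vfact_def by (rule multiplicity_dvd)
  have nu: "\<not> is_unit (11::nat)" by simp
  have nd: "\<not> 11 dvd (fact m :: nat) div 11^vfact m"
    unfolding vfact_def by (rule multiplicity_decompose) (simp_all add: nu)
  define Q where "Q = (fact m :: nat) div 11^vfact m"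
  have "fact m = 11^vfact m * Q" unfolding Q_def using d by simp
  then have "int (fact m) = 11^vfact m * int Q" by simp
  moreover have "\<not> (11::int) dvd int Q"
  proof
    assume "(11::int) dvd int Q"
    then have "int 11 dvd int Q" by simp
    then have "11 dvd Q" by (simp only: int_dvd_int_iff)
    then show False using nd unfolding Q_def by simp
  qed
  ultimately show ?thesis using that by blast
qed


lemma enum11: "0 \<le> (x::int) \<Longrightarrow> x < 11 \<Longrightarrow> x \<in> {0,1,2,3,4,5,6,7,8,9,10}"
proof -
  assume "0 \<le> x" "x < 11"
  then obtain k :: nat where k: "x = int k" "k < 11" by (metis nat_0_le nat_less_iff of_nat_numeral)
  then have "k \<in> {0,1,2,3,4,5,6,7,8,9,10}" by (auto simp: numeral_eq_Suc less_Suc_eq)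
  then show ?thesis using k by auto
qed

lemma root_mod11: "0 \<le> (x::int) \<Longrightarrow> x < 11 \<Longrightarrow> [x^2 - x - 1 = 0] (mod 11) \<Longrightarrow> x = 4 \<or> x = 8"
proof -
  assume a: "0 \<le> x" "x < 11" "[x^2 - x - 1 = 0] (mod 11)"
  from enum11[OF a(1,2)] have "x \<in> {0,1,2,3,4,5,6,7,8,9,10}" .
  then show ?thesis using a(3) by (auto simp: cong_def)
qed

lemma root_mod121: "0 \<le> (x::int) \<Longrightarrow> x < 121 \<Longrightarrow> x mod 11 = 4 \<or> x mod 11 = 8 \<Longrightarrow>
   [x^2 - x - 1 = 0] (mod 121) \<Longrightarrow> x = 37 \<or> x = 85"
proof -
  assume a: "0 \<le> x" "x < 121" "x mod 11 = 4 \<or> x mod 11 = 8" "[x^2 - x - 1 = 0] (mod 121)"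
  let ?t = "x div 11"
  have "0 \<le> ?t" "?t < 11" using a by auto
  then have t: "?t \<in> {0,1,2,3,4,5,6,7,8,9,10}" by (rule enum11)
  have x: "x = 11 * ?t + x mod 11" by simp
  show ?thesis using a(3)
  proof
    assume "x mod 11 = 4"
    then have "x = 11 * ?t + 4" using x by simp
    then show ?thesis using t a(4) by (auto simp: cong_def)
  next
    assume "x mod 11 = 8"
    then have "x = 11 * ?t + 8" using x by simp
    then show ?thesis using t a(4) by (auto simp: cong_def)
  qed
qed

lemma u2_vals: "(37 * ((37 ^ 11 mod 121) ^ 9 mod 121)) mod 121 \<noteq> (1::int)"
  "(85 * ((85 ^ 11 mod 121) ^ 9 mod 121)) mod 121 \<noteq> (1::int)" by simp_all

lemma fib_check: "i \<le> 9 \<Longrightarrow> [(2*4 - 1) * int (fib i) = 4^i - 8^i] (mod 11) \<and> [(2*8 - 1) * int (fib i) = 8^i - 4^i] (mod 11)"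
proof -
  assume "i \<le> 9"
  then have "i \<in> {0,1,2,3,4,5,6,7,8,9}" by (auto simp: numeral_eq_Suc le_Suc_eq)
  then show ?thesis by (auto simp: cong_def numeral_eq_Suc)
qed

lemma lucas_check: "i \<le> 9 \<Longrightarrow> i \<noteq> 5 \<Longrightarrow> \<not> 11 dvd ((4::int)^i + 8^i)"
proof -
  assume "i \<le> 9" "i \<noteq> 5"
  then have "i \<in> {0,1,2,3,4,6,7,8,9}" by (auto simp: numeral_eq_Suc le_Suc_eq)
  then show ?thesis by auto
qed


lemma root_cong:
  assumes "zp_sub 11 (zp_sub 11 (zp_pow 11 x 2) x) (zp_of_int 11 1) = zp_of_int 11 0"
  shows "[x n ^ 2 - x n - 1 = 0] (mod 11^n)"
proof -
  have "zp_sub 11 (zp_sub 11 (zp_pow 11 x 2) x) (zp_of_int 11 1) n = zp_of_int 11 0 n"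
    using assms by simp
  then have "(x n ^ 2 - x n - 1) mod 11^n = 0 mod 11^n" unfolding lv by (simp add: mod_simps)
  then show ?thesis by (simp add: cong_def)
qed

lemma hensel_unique:
  assumes a: "[a^2 - a - 1 = 0] (mod 11^n)" and b: "[b^2 - b - 1 = 0] (mod 11^n)"
    and ab: "[a = b] (mod 11)" and u: "\<not> 11 dvd 2 * a - (1::int)"
  shows "[a = b] (mod 11^n)"
proof -
  have "[a^2 - a - 1 = b^2 - b - 1] (mod 11^n)" using a b by (meson cong_sym cong_trans)
  then have "11^n dvd (a^2 - a - 1) - (b^2 - b - 1)" by (simp add: cong_iff_dvd_diff)
  moreover have "(a^2 - a - 1) - (b^2 - b - 1) = (a - b) * (a + b - 1)" by (simp add: power2_eq_square algebra_simps)
  ultimately have d: "11^n dvd (a - b) * (a + b - 1)" by simp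
  have "[a + b - 1 = 2 * a - 1] (mod 11)"
  proof -
    have "[a + b - 1 = a + a - 1] (mod 11)" using ab by (intro cong_diff cong_add) (simp_all add: cong_sym)
    then show ?thesis by simp
  qed
  then have "\<not> 11 dvd a + b - 1" using u by (simp add: cong_dvd_iff)
  then have "11^n dvd a - b" using pow_dvd_cancel d by blast
  then show ?thesis by (simp add: cong_iff_dvd_diff)
qed

locale fs =
  fixes \<phi> \<phi>' :: "nat \<Rightarrow> int" and i :: nat
  assumes phi: "\<phi> \<in> Zp 11" and phi': "\<phi>' \<in> Zp 11" and ne: "\<phi> \<noteq> \<phi>'"
    and r: "zp_sub 11 (zp_sub 11 (zp_pow 11 \<phi> 2) \<phi>) (zp_of_int 11 1) = zp_of_int 11 0"
    and r': "zp_sub 11 (zp_sub 11 (zp_pow 11 \<phi>' 2) \<phi>') (zp_of_int 11 1) = zp_of_int 11 0"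
    and i9: "i \<le> 9" and i5: "i \<noteq> 5"
begin

lemma rootval1: "x \<in> Zp 11 \<Longrightarrow> zp_sub 11 (zp_sub 11 (zp_pow 11 x 2) x) (zp_of_int 11 1) = zp_of_int 11 0 \<Longrightarrow> x 1 = 4 \<or> x 1 = 8"
  using root_mod11[of "x 1"] zp_range[of x 1] root_cong[of x 1] by simp

lemma p1: "\<phi> 1 = 4 \<or> \<phi> 1 = 8" using rootval1[OF phi r] .
lemma p1': "\<phi>' 1 = 4 \<or> \<phi>' 1 = 8" using rootval1[OF phi' r'] .

lemma p12: "\<phi> 1 \<noteq> \<phi>' 1"
proof
  assume eq: "\<phi> 1 = \<phi>' 1"
  have "\<phi> = \<phi>'"
  proof (rule zp_ext[OF phi phi'])
    fix n
    show "[\<phi> n = \<phi>' n] (mod 11^n)"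
    proof (cases "n = 0")
      case True then show ?thesis by simp
    next
      case False
      have c1: "[\<phi> n = \<phi> 1] (mod 11)" using zp_lv1[OF phi] False by simp
      have c2: "[\<phi>' n = \<phi>' 1] (mod 11)" using zp_lv1[OF phi'] False by simp
      have ab: "[\<phi> n = \<phi>' n] (mod 11)" using c1 c2 eq by (metis cong_sym cong_trans)
      have "[2 * \<phi> n - 1 = 2 * \<phi> 1 - 1] (mod 11)" using c1 by (intro cong_diff cong_mult) simp_all
      moreover have "\<not> 11 dvd 2 * \<phi> 1 - 1" using p1 by auto
      ultimately have "\<not> 11 dvd 2 * \<phi> n - 1" by (simp add: cong_dvd_iff)
      then show ?thesis using hensel_unique[OF root_cong[OF r] root_cong[OF r'] ab] by simp
    qed
  qed
  then show False using ne by simp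
qed

lemma pp: "(\<phi> 1 = 4 \<and> \<phi>' 1 = 8) \<or> (\<phi> 1 = 8 \<and> \<phi>' 1 = 4)" using p1 p1' p12 by auto

lemma p2: "\<phi> 2 = 37 \<or> \<phi> 2 = 85"
proof -
  have "\<phi> 2 mod 11 = \<phi> 1" using zp_coh[OF phi, of 1 2] by simp
  then show ?thesis using root_mod121[of "\<phi> 2"] zp_range[OF phi, of 2] root_cong[OF r, of 2] p1 by simp
qed

lemma nd1: "\<not> 11 dvd \<phi> 1" "\<not> 11 dvd \<phi>' 1" using p1 p1' by auto

lemma om: "teich 11 \<phi> \<in> Zp 11" "teich 11 \<phi> 1 = \<phi> 1" "\<And>n. [teich 11 \<phi> n ^ 10 = 1] (mod 11^n)"
  "\<And>n. teich 11 \<phi> n = \<phi> n ^ (11^(n-1)) mod 11^n"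
  using teich_props[OF phi nd1(1)] by auto
lemma om': "teich 11 \<phi>' \<in> Zp 11" "teich 11 \<phi>' 1 = \<phi>' 1"
  using teich_props[OF phi' nd1(2)] by auto

lemma u_eq: "zp_div 11 \<phi> (teich 11 \<phi>) = zp_mult 11 \<phi> (zp_pow 11 (teich 11 \<phi>) 9)"
proof (rule div_eq[OF om(1) _ _])
  show "zp_mult 11 \<phi> (zp_pow 11 (teich 11 \<phi>) 9) \<in> Zp 11" using phi om(1) by simp
  show "teich 11 \<phi> 1 \<noteq> 0" using om(2) p1 by auto
  show "zp_mult 11 (teich 11 \<phi>) (zp_mult 11 \<phi> (zp_pow 11 (teich 11 \<phi>) 9)) = \<phi>"
  proof
    fix n
    let ?w = "teich 11 \<phi> n"
    have "[zp_mult 11 (teich 11 \<phi>) (zp_mult 11 \<phi> (zp_pow 11 (teich 11 \<phi>) 9)) n = \<phi> n * (?w * ?w ^ 9)] (mod 11^n)"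
      unfolding lv cong_def by (simp add: mod_simps mult_ac)
    also have "?w * ?w ^ 9 = ?w ^ 10" by (simp add: power_Suc[symmetric] del: power_Suc)
    also have "[\<phi> n * ?w ^ 10 = \<phi> n * 1] (mod 11^n)" using om(3) by (rule cong_scalar_left)
    finally show "zp_mult 11 (teich 11 \<phi>) (zp_mult 11 \<phi> (zp_pow 11 (teich 11 \<phi>) 9)) n = \<phi> n"
      using zp_eq_of_cong[of _ \<phi> n] phi om(1) by simp
  qed
qed

definition u where "u = zp_div 11 \<phi> (teich 11 \<phi>)"

lemma uZ: "u \<in> Zp 11" unfolding u_def u_eq using phi om(1) by simp

lemma u1: "u 1 = 1"
  unfolding u_def u_eq lv using om(2) p1 by auto

lemma u2: "u 2 \<noteq> 1"
proof -
  have "teich 11 \<phi> 2 = \<phi> 2 ^ 11 mod 121" using om(4)[of 2] by simp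
  then show ?thesis unfolding u_def u_eq lv using p2 u2_vals by auto
qed

definition ell where "ell = (SOME l. l \<in> Zp 11 \<and> \<not> 11 dvd l 1 \<and> (\<forall>n. zp_log 11 u n = (11 * l n) mod 11^n))"

lemma ell: "ell \<in> Zp 11" "\<not> 11 dvd ell 1" "\<And>n. zp_log 11 u n = (11 * ell n) mod 11^n"
proof -
  obtain l where "l \<in> Zp 11" "\<not> 11 dvd l 1" "\<And>n. zp_log 11 u n = (11 * l n) mod 11^n"
    using log_props[OF uZ u1 u2] by blast
  then have "\<exists>l. l \<in> Zp 11 \<and> \<not> 11 dvd l 1 \<and> (\<forall>n. zp_log 11 u n = (11 * l n) mod 11^n)" by blast
  from someI_ex[OF this] show "ell \<in> Zp 11" "\<not> 11 dvd ell 1" "\<And>n. zp_log 11 u n = (11 * ell n) mod 11^n"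
    unfolding ell_def by blast+
qed

lemma LZ: "zp_log 11 u \<in> Zp 11"
proof -
  have "zp_log 11 u = zp_mult 11 (zp_of_int 11 11) ell"
  proof
    fix n show "zp_log 11 u n = zp_mult 11 (zp_of_int 11 11) ell n" using ell(3) by (simp add: lv mod_simps)
  qed
  then show ?thesis using ell(1) by simp
qed

definition s5 where "s5 = zp_sub 11 (zp_mult 11 (zp_of_int 11 2) \<phi>) (zp_of_int 11 1)"

lemma s5: "s5 \<in> Zp 11" "\<not> 11 dvd s5 1" "[s5 1 = 2 * \<phi> 1 - 1] (mod 11)"
proof -
  show "s5 \<in> Zp 11" unfolding s5_def using phi by simp
  show "[s5 1 = 2 * \<phi> 1 - 1] (mod 11)" unfolding s5_def lv cong_def by (simp add: mod_simps)
  show "\<not> 11 dvd s5 1" unfolding s5_def lv using p1 by auto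
qed

definition C where "C m = zp_sub 11 (zp_pow 11 (teich 11 \<phi>) i) (zp_mult 11 (zp_of_int 11 ((-1)^m)) (zp_pow 11 (teich 11 \<phi>') i))"

lemma CZ: "C m \<in> Zp 11" unfolding C_def using om(1) om'(1) by simp

lemma C1: "[C m 1 = \<phi> 1 ^ i - (-1)^m * \<phi>' 1 ^ i] (mod 11)"
  unfolding C_def lv cong_def using om(2) om'(2) by (simp add: mod_simps)

definition A where "A m = zp_div 11 (zp_mult 11 (C m) (zp_pow 11 (zp_log 11 u) m))
   (zp_mult 11 (zp_of_int 11 (int (fact m))) s5)"

lemma fib_term_eq: "fib_term 11 i \<phi> \<phi>' x m = zp_mult 11 (A m) (zp_pow 11 x m)"
  unfolding fib_term_def A_def C_def u_def s5_def ..

lemma A_struct: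
  obtains Q t where "int (fact m) = 11^vfact m * Q" "t \<in> Zp 11" "\<And>n. [Q * s5 n * t n = 1] (mod 11^n)"
    "A m \<in> Zp 11" "\<And>n. [A m n = 11^(m - vfact m) * (C m n * ell n ^ m * t n)] (mod 11^n)"
proof -
  obtain Q where c: "int (fact m) = 11^vfact m * Q" and Q: "\<not> 11 dvd Q" by (rule fact_decomp)
  let ?E = "vfact m"
  have Em: "?E \<le> m" using vfact_bound[of m] by simp
  let ?a = "zp_mult 11 (C m) (zp_pow 11 (zp_log 11 u) m)"
  let ?y = "zp_mult 11 (zp_of_int 11 (11^(m - ?E))) (zp_mult 11 (C m) (zp_pow 11 ell m))"
  have a: "?a \<in> Zp 11" using CZ LZ by simp
  have y: "?y \<in> Zp 11" using CZ ell(1) by simp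
  have ay: "[?a n = 11^?E * ?y n] (mod 11^n)" for n
  proof -
    have "[?a n = C m n * (11 * ell n) ^ m] (mod 11^n)" unfolding lv cong_def ell(3) by (simp add: mod_simps)
    also have "C m n * (11 * ell n) ^ m = 11^?E * (11^(m - ?E) * (C m n * ell n ^ m))"
    proof -
      have "(11::int)^?E * 11^(m - ?E) = 11^m" using Em by (simp add: power_add[symmetric])
      then show ?thesis by (simp add: power_mult_distrib algebra_simps)
    qed
    also have "[11^?E * (11^(m - ?E) * (C m n * ell n ^ m)) = 11^?E * ?y n] (mod 11^n)"
      by (rule cong_scalar_left) (simp add: lv cong_def mod_simps)
    finally show ?thesis .
  qed
  obtain t where t: "t \<in> Zp 11" and ti: "\<And>n. [Q * s5 n * t n = 1] (mod 11^n)"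
    and dv: "zp_div 11 ?a (zp_mult 11 (zp_of_int 11 (int (fact m))) s5) = zp_mult 11 ?y t"
    using div_witness[OF s5(1) s5(2) c Q a y ay] by blast
  have AA: "A m = zp_mult 11 ?y t" unfolding A_def using dv .
  have AZ: "A m \<in> Zp 11" using AA y t by simp
  have cg: "[A m n = 11^(m - ?E) * (C m n * ell n ^ m * t n)] (mod 11^n)" for n
    unfolding AA lv cong_def by (simp add: mod_simps) (simp add: mult_ac)
  show ?thesis using that c t ti AZ cg by blast
qed

end

context fs begin

lemma AZ: "A m \<in> Zp 11" using A_struct by metis

lemma A_big: "2 * n \<le> m \<Longrightarrow> A m n = 0"
proof -
  assume nm: "2 * n \<le> m"
  obtain Q t where "A m \<in> Zp 11" "\<And>n. [A m n = 11^(m - vfact m) * (C m n * ell n ^ m * t n)] (mod 11^n)"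
    using A_struct by metis
  moreover have "n \<le> m - vfact m" using vfact_bound[of m] nm by linarith
  ultimately show ?thesis using cong_zero_big by blast
qed

lemma A_lv1: "1 \<le> m \<Longrightarrow> A m 1 = 0"
proof -
  assume nm: "1 \<le> m"
  obtain Q t where "A m \<in> Zp 11" "\<And>n. [A m n = 11^(m - vfact m) * (C m n * ell n ^ m * t n)] (mod 11^n)"
    using A_struct by metis
  moreover have "1 \<le> m - vfact m" using vfact_bound[of m] nm by linarith
  ultimately show ?thesis using cong_zero_big by blast
qed

lemma A_121: "2 \<le> m \<Longrightarrow> 2 \<le> n \<Longrightarrow> 121 dvd A m n"
proof -
  assume m2: "2 \<le> m" and n2: "2 \<le> n"
  obtain Q t where cg: "\<And>n. [A m n = 11^(m - vfact m) * (C m n * ell n ^ m * t n)] (mod 11^n)"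
    using A_struct by metis
  have j: "2 \<le> m - vfact m" using vfact_bound[of m] m2 by linarith
  obtain d where d: "m - vfact m = 2 + d" using j le_Suc_ex by blast
  have "(11::int)^(m - vfact m) = 11^2 * 11^d" unfolding d by (rule power_add)
  then have "[A m n = 11^2 * (11^d * (C m n * ell n ^ m * t n))] (mod 11^n)"
    using cg[of n] by (simp add: mult.assoc)
  from cong_dvd_small[OF this n2] show ?thesis by simp
qed

lemma lucas: "\<not> 11 dvd \<phi> 1 ^ i + \<phi>' 1 ^ i"
  using pp lucas_check[OF i9 i5] by (auto simp: add.commute)

lemma A_one: "2 \<le> n \<Longrightarrow> \<exists>c. A 1 n = 11 * c \<and> \<not> 11 dvd c"
proof -
  assume n2: "2 \<le> n"
  obtain Q t where c: "int (fact 1) = 11^vfact 1 * Q" and t: "t \<in> Zp 11"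
    and ti: "\<And>n. [Q * s5 n * t n = 1] (mod 11^n)"
    and cg: "\<And>n. [A 1 n = 11^(1 - vfact 1) * (C 1 n * ell n ^ 1 * t n)] (mod 11^n)"
    using A_struct by metis
  have v: "vfact 1 = 0" using vfact_bound[of 1] by simp
  let ?X = "C 1 n * ell n * t n"
  have n1: "1 \<le> n" using n2 by simp
  have "\<not> 11 dvd C 1 n"
  proof -
    have "[C 1 n = C 1 1] (mod 11)" using zp_lv1[OF CZ n1] .
    moreover have "[C 1 1 = \<phi> 1 ^ i + \<phi>' 1 ^ i] (mod 11)" using C1[of 1] by simp
    ultimately show ?thesis using lucas by (metis cong_dvd_iff cong_trans)
  qed
  moreover have "\<not> 11 dvd ell n" using zp_lv1[OF ell(1) n1] ell(2) by (simp add: cong_dvd_iff)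
  moreover have "\<not> 11 dvd t n"
  proof
    assume "11 dvd t n"
    then have "11 dvd Q * s5 n * t n" by simp
    moreover have "[Q * s5 n * t n = 1] (mod 11)" by (rule cong_dvd_modulus[OF ti[of n]]) (use n1 in \<open>simp add: dvd_power\<close>)
    ultimately show False by (simp add: cong_dvd_iff)
  qed
  ultimately have X: "\<not> 11 dvd ?X" using dvd11_mult by simp
  have "[A 1 n = 11 * ?X] (mod 11^n)" using cg[of n] v by (simp add: mult.assoc)
  moreover obtain d where nd: "n = 2 + d" using n2 le_Suc_ex by blast
  moreover have "(121::int) dvd 11^(2+d)" by (simp add: power_add)
  ultimately have "[A 1 n = 11 * ?X] (mod 121)" using cong_dvd_modulus by blast
  then have "121 dvd A 1 n - 11 * ?X" by (simp add: cong_iff_dvd_diff)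
  then obtain k where k: "A 1 n - 11 * ?X = 121 * k" by blast
  then have "A 1 n = 11 * (?X + 11 * k)" by simp
  moreover have "\<not> 11 dvd ?X + 11 * k" using X by (simp add: dvd_add_left_iff)
  ultimately show ?thesis by blast
qed

lemma A_zero: "A 0 1 = int (fib i mod 11)"
proof -
  obtain Q t where c: "int (fact 0) = 11^vfact 0 * Q" and t: "t \<in> Zp 11"
    and ti: "\<And>n. [Q * s5 n * t n = 1] (mod 11^n)"
    and cg: "\<And>n. [A 0 n = 11^(0 - vfact 0) * (C 0 n * ell n ^ 0 * t n)] (mod 11^n)"
    using A_struct by metis
  have v: "vfact 0 = 0" using vfact_bound[of 0] by simp
  then have Q: "Q = 1" using c by simp
  have a: "[A 0 1 = C 0 1 * t 1] (mod 11)" using cg[of 1] by simp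
  have st: "[s5 1 * t 1 = 1] (mod 11)" using ti[of 1] Q by simp
  have c0: "[C 0 1 = \<phi> 1 ^ i - \<phi>' 1 ^ i] (mod 11)" using C1[of 0] by simp
  have fc: "[(2 * \<phi> 1 - 1) * int (fib i) = \<phi> 1 ^ i - \<phi>' 1 ^ i] (mod 11)"
    using pp fib_check[OF i9] by auto
  have "[A 0 1 = (2 * \<phi> 1 - 1) * int (fib i) * t 1] (mod 11)"
    using a c0 fc by (meson cong_scalar_right cong_sym cong_trans)
  also have "[(2 * \<phi> 1 - 1) * int (fib i) * t 1 = s5 1 * int (fib i) * t 1] (mod 11)"
    using s5(3) by (intro cong_scalar_right) (simp add: cong_sym)
  also have "s5 1 * int (fib i) * t 1 = int (fib i) * (s5 1 * t 1)" by simp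
  also have "[int (fib i) * (s5 1 * t 1) = int (fib i) * 1] (mod 11)" using st by (rule cong_scalar_left)
  finally have "A 0 1 mod 11 = int (fib i) mod 11" by (simp add: cong_def)
  then show ?thesis using zp_modself[OF AZ, of 0 1] by (simp add: of_nat_mod)
qed

end

lemma split01: "2 \<le> (N::nat) \<Longrightarrow> (\<Sum>m<N. g m) = g 0 + g 1 + (\<Sum>m\<in>{2..<N}. (g m :: int))"
proof -
  assume N: "2 \<le> N"
  have "{..<N} = {0,1} \<union> {2..<N}" using N by auto
  then have "(\<Sum>m<N. g m) = (\<Sum>m\<in>{0,1}. g m) + (\<Sum>m\<in>{2..<N}. g m)"
    by (simp add: sum.union_disjoint)
  then show ?thesis by simp
qed

context fs begin

definition P where "P n r = (\<Sum>m<2*n. A m n * r^m) mod 11^n"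

lemma P_range: "0 \<le> P n r \<and> P n r < 11^n" unfolding P_def by simp

lemma sums_x: "x \<in> Zp 11 \<Longrightarrow> zp_sums 11 (fib_term 11 i \<phi> \<phi>' x) (\<lambda>n. P n (x n))"
proof -
  assume x: "x \<in> Zp 11"
  let ?f = "fib_term 11 i \<phi> \<phi>' x"
  have big: "?f m n mod 11^n = 0" if "2 * n \<le> m" for n m
    unfolding fib_term_eq lv using A_big[OF that] by simp
  have "zp_sums 11 ?f (\<lambda>n. (\<Sum>m<2*n. ?f m n) mod 11^n)"
    by (rule sums_exists) (use big in auto)
  moreover have "(\<lambda>n. (\<Sum>m<2*n. ?f m n) mod 11^n) = (\<lambda>n. P n (x n))"
    unfolding P_def fib_term_eq lv by (simp add: mod_simps)
  ultimately show ?thesis by simp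
qed

lemma P_in: "x \<in> Zp 11 \<Longrightarrow> (\<lambda>n. P n (x n)) \<in> Zp 11"
proof -
  assume x: "x \<in> Zp 11"
  let ?f = "fib_term 11 i \<phi> \<phi>' x"
  have big: "?f m n mod 11^n = 0" if "2 * n \<le> m" for n m
    unfolding fib_term_eq lv using A_big[OF that] by simp
  have "(\<lambda>n. (\<Sum>m<2*n. ?f m n) mod 11^n) \<in> Zp 11"
    by (rule sums_limit_in) (use big AZ x in \<open>auto simp: fib_term_eq\<close>)
  moreover have "(\<lambda>n. (\<Sum>m<2*n. ?f m n) mod 11^n) = (\<lambda>n. P n (x n))"
    unfolding P_def fib_term_eq lv by (simp add: mod_simps)
  ultimately show ?thesis by simp
qed

lemma P_lv: "k \<le> n \<Longrightarrow> P n r mod 11^k = P k r"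
proof -
  assume kn: "k \<le> n"
  have d: "(11::int)^k dvd 11^n" using kn by (simp add: le_imp_power_dvd)
  have "P n r mod 11^k = (\<Sum>m<2*n. A m n * r^m) mod 11^k" unfolding P_def using d by (simp add: mod_mod_cancel)
  also have "\<dots> = (\<Sum>m<2*n. A m n * r^m mod 11^k) mod 11^k" by (simp add: mod_simps)
  also have "(\<Sum>m<2*n. A m n * r^m mod 11^k) = (\<Sum>m<2*n. A m k * r^m mod 11^k)"
  proof (rule sum.cong)
    fix m assume "m \<in> {..<2*n}"
    have "A m n mod 11^k = A m k" using zp_coh[OF AZ kn] .
    then show "A m n * r^m mod 11^k = A m k * r^m mod 11^k" by (metis mod_mult_left_eq)
  qed simp
  also have "(\<Sum>m<2*n. A m k * r^m mod 11^k) mod 11^k = (\<Sum>m<2*n. A m k * r^m) mod 11^k" by (simp add: mod_simps)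
  also have "\<dots> = (\<Sum>m<2*k. A m k * r^m) mod 11^k"
  proof (rule tail_sum)
    show "\<And>m. 2 * k \<le> m \<Longrightarrow> A m k * r ^ m mod 11 ^ k = 0" using A_big by simp
    show "2 * k \<le> 2 * n" using kn by simp
  qed
  finally show ?thesis unfolding P_def .
qed

lemma P1: "P 1 r = A 0 1"
proof -
  have "P 1 r = (A 0 1 + A 1 1 * r) mod 11" unfolding P_def by (simp add: numeral_2_eq_2)
  also have "\<dots> = A 0 1" using A_lv1[of 1] zp_modself[OF AZ, of 0 1] by simp
  finally show ?thesis .
qed

lemma key: "(11::int)^Suc k dvd P (Suc k) r - P (Suc k) s \<longleftrightarrow> 11^k dvd r - s"
proof (cases "k = 0")
  case True
  then show ?thesis using P1 by simp
next
  case False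
  let ?n = "Suc k"
  have n2: "2 \<le> ?n" using False by simp
  define S where "S m = (\<Sum>j<m. s ^ (m - Suc j) * r ^ j)" for m
  have diff: "r^m - s^m = (r - s) * S m" for m unfolding S_def by (rule power_diff_sumr2)
  define W where "W = (\<Sum>m<2*?n. A m ?n * S m)"
  have D: "(\<Sum>m<2*?n. A m ?n * r^m) - (\<Sum>m<2*?n. A m ?n * s^m) = (r - s) * W"
  proof -
    have "(\<Sum>m<2*?n. A m ?n * r^m) - (\<Sum>m<2*?n. A m ?n * s^m) = (\<Sum>m<2*?n. A m ?n * (r^m - s^m))"
      by (simp add: sum_subtractf right_diff_distrib)
    also have "\<dots> = (\<Sum>m<2*?n. (r - s) * (A m ?n * S m))" by (simp add: diff mult_ac)
    also have "\<dots> = (r - s) * W" unfolding W_def by (rule sum_distrib_left[symmetric])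
    finally show ?thesis .
  qed
  obtain c where c: "A 1 ?n = 11 * c" "\<not> 11 dvd c" using A_one[OF n2] by blast
  have "121 dvd (\<Sum>m\<in>{2..<2*?n}. A m ?n * S m)"
    by (rule dvd_sum) (use A_121 n2 in auto)
  then obtain K where K: "(\<Sum>m\<in>{2..<2*?n}. A m ?n * S m) = 121 * K" by blast
  have W: "W = A 0 ?n * S 0 + A 1 ?n * S 1 + (\<Sum>m\<in>{2..<2*?n}. A m ?n * S m)"
    unfolding W_def by (rule split01) simp
  have "S 0 = 0" "S 1 = 1" unfolding S_def by simp_all
  then have "W = 11 * (c + 11 * K)" using W c K by simp
  then have DD: "(\<Sum>m<2*?n. A m ?n * r^m) - (\<Sum>m<2*?n. A m ?n * s^m) = 11 * ((r - s) * (c + 11 * K))"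
    using D by (simp add: mult_ac)
  have nc: "\<not> 11 dvd c + 11 * K" using c(2) by (simp add: dvd_add_left_iff)
  have "11^?n dvd P ?n r - P ?n s \<longleftrightarrow> [P ?n r = P ?n s] (mod 11^?n)" by (simp add: cong_iff_dvd_diff)
  also have "\<dots> \<longleftrightarrow> [(\<Sum>m<2*?n. A m ?n * r^m) = (\<Sum>m<2*?n. A m ?n * s^m)] (mod 11^?n)"
    unfolding P_def cong_def by simp
  also have "\<dots> \<longleftrightarrow> 11 * 11^k dvd 11 * ((r - s) * (c + 11 * K))"
    using DD by (simp add: cong_iff_dvd_diff)
  also have "\<dots> \<longleftrightarrow> 11^k dvd (r - s) * (c + 11 * K)" by simp
  also have "\<dots> \<longleftrightarrow> 11^k dvd r - s"
    using pow_dvd_cancel[of k "r - s" "c + 11 * K"] nc by auto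
  finally show ?thesis .
qed

end

lemma eq_of_dvd_range: "0 \<le> (r::int) \<Longrightarrow> r < M \<Longrightarrow> 0 \<le> s \<Longrightarrow> s < M \<Longrightarrow> M dvd r - s \<Longrightarrow> r = s"
proof -
  assume a: "0 \<le> r" "r < M" "0 \<le> s" "s < M" "M dvd r - s"
  have "r mod M = s mod M" using a(5) mod_eq_dvd_iff[of r M s] by blast
  moreover have "r mod M = r" "s mod M = s" using a by simp_all
  ultimately show "r = s" by simp
qed

context fs begin

lemma Pmod11: "P (Suc k) r mod 11 = A 0 1"
  using P_lv[of 1 "Suc k" r] P1 by simp

lemma surj_level:
  assumes z: "z \<in> Zp 11" and z1: "z 1 = A 0 1"
  shows "\<exists>r. r \<in> {0..<11^k} \<and> P (Suc k) r = z (Suc k)"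
proof -
  let ?S = "{0..<(11::int)^k}"
  let ?g = "\<lambda>r. P (Suc k) r div 11"
  have into: "?g ` ?S \<subseteq> ?S"
  proof
    fix y assume "y \<in> ?g ` ?S"
    then obtain r where y: "y = ?g r" by blast
    have "0 \<le> P (Suc k) r" "P (Suc k) r < 11 * 11^k" using P_range[of "Suc k" r] by auto
    then show "y \<in> ?S" unfolding y by auto
  qed
  have dec: "P (Suc k) r = 11 * ?g r + A 0 1" for r
    using Pmod11[of k r] by (metis div_mult_mod_eq mult.commute)
  have inj: "inj_on ?g ?S"
  proof
    fix r s assume r: "r \<in> ?S" and s: "s \<in> ?S" and e: "?g r = ?g s"
    have "P (Suc k) r = P (Suc k) s" using dec[of r] dec[of s] e by simp
    then have "11^k dvd r - s" using key[of k r s] by simp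
    then show "r = s" using r s eq_of_dvd_range[of r "11^k" s] by simp
  qed
  have img: "?g ` ?S = ?S" by (rule endo_inj_surj) (use into inj in auto)
  have zr: "0 \<le> z (Suc k)" "z (Suc k) < 11 * 11^k" using zp_range[OF z, of "Suc k"] by auto
  then have zs: "z (Suc k) div 11 \<in> ?S" by auto
  have "z (Suc k) div 11 \<in> ?g ` ?S" unfolding img by (rule zs)
  then obtain r where r: "r \<in> ?S" "z (Suc k) div 11 = ?g r" by (rule imageE)
  have "z (Suc k) mod 11 = z 1" using zp_coh[OF z, of 1 "Suc k"] by simp
  then have "z (Suc k) = 11 * (z (Suc k) div 11) + A 0 1" using z1 by (metis div_mult_mod_eq mult.commute)
  then have "P (Suc k) r = z (Suc k)" using dec[of r] r(2) by simp
  then show ?thesis using r(1) by blast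
qed

lemma main:
  "(\<forall>x\<in>Zp 11. \<exists>z. zp_sums 11 (fib_term 11 i \<phi> \<phi>' x) z)
   \<and> {z. \<exists>x\<in>Zp 11. zp_sums 11 (fib_term 11 i \<phi> \<phi>' x) z} = {z \<in> Zp 11. z 1 = int (fib i mod 11)}"
proof (intro conjI)
  show "\<forall>x\<in>Zp 11. \<exists>z. zp_sums 11 (fib_term 11 i \<phi> \<phi>' x) z" using sums_x by blast
  show "{z. \<exists>x\<in>Zp 11. zp_sums 11 (fib_term 11 i \<phi> \<phi>' x) z} = {z \<in> Zp 11. z 1 = int (fib i mod 11)}"
  proof (intro equalityI subsetI)
    fix z assume "z \<in> {z. \<exists>x\<in>Zp 11. zp_sums 11 (fib_term 11 i \<phi> \<phi>' x) z}"
    then obtain x where x: "x \<in> Zp 11" and s: "zp_sums 11 (fib_term 11 i \<phi> \<phi>' x) z" by blast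
    have zeq: "z = (\<lambda>n. P n (x n))" using sums_unique[OF s sums_x[OF x]] .
    have "z \<in> Zp 11" using P_in[OF x] zeq by simp
    moreover have "z 1 = int (fib i mod 11)" using zeq P1 A_zero by simp
    ultimately show "z \<in> {z \<in> Zp 11. z 1 = int (fib i mod 11)}" by simp
  next
    fix z assume "z \<in> {z \<in> Zp 11. z 1 = int (fib i mod 11)}"
    then have z: "z \<in> Zp 11" and z1: "z 1 = A 0 1" using A_zero by auto
    define x where "x k = (SOME r. r \<in> {0..<11^k} \<and> P (Suc k) r = z (Suc k))" for k
    have xk: "x k \<in> {0..<11^k} \<and> P (Suc k) (x k) = z (Suc k)" for k
      unfolding x_def by (rule someI_ex) (rule surj_level[OF z z1])
    have xZ: "x \<in> Zp 11"
    proof (rule zp_memI)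
      fix k show "x k mod 11^k = x k" using xk[of k] by simp
    next
      fix k
      have "P (Suc k) (x (Suc k)) = P (Suc (Suc k)) (x (Suc k)) mod 11^Suc k" using P_lv[of "Suc k" "Suc (Suc k)"] by simp
      also have "\<dots> = z (Suc (Suc k)) mod 11^Suc k" using xk[of "Suc k"] by simp
      also have "\<dots> = z (Suc k)" using zp_coh[OF z, of "Suc k" "Suc (Suc k)"] by simp
      also have "\<dots> = P (Suc k) (x k)" using xk[of k] by simp
      finally have "11^k dvd x (Suc k) - x k" using key[of k "x (Suc k)" "x k"] by simp
      then show "[x (Suc k) = x k] (mod 11^k)" by (simp add: cong_iff_dvd_diff)
    qed
    have "(\<lambda>n. P n (x n)) = z"
    proof
      fix n show "P n (x n) = z n"
      proof (cases n)
        case 0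
        then show ?thesis using zp_range[OF z, of 0] P_range[of 0 "x 0"] by simp
      next
        case (Suc k)
        have "[x (Suc k) = x k] (mod 11^k)" using zp_cong_Suc[OF xZ] .
        then have "11^Suc k dvd P (Suc k) (x (Suc k)) - P (Suc k) (x k)" using key by (simp add: cong_iff_dvd_diff)
        then have "P (Suc k) (x (Suc k)) = P (Suc k) (x k)"
          using P_range eq_of_dvd_range by blast
        then show ?thesis using xk[of k] Suc by simp
      qed
    qed
    then have "zp_sums 11 (fib_term 11 i \<phi> \<phi>' x) z" using sums_x[OF xZ] by simp
    then show "z \<in> {z. \<exists>x\<in>Zp 11. zp_sums 11 (fib_term 11 i \<phi> \<phi>' x) z}" using xZ by blast
  qed
qed

end

theorem lemma5p4:
  fixes \<phi> \<phi>' :: "nat \<Rightarrow> int" and i :: nat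
  assumes "\<phi> \<in> Zp 11" and "\<phi>' \<in> Zp 11" and "\<phi> \<noteq> \<phi>'"
    and "zp_sub 11 (zp_sub 11 (zp_pow 11 \<phi> 2) \<phi>) (zp_of_int 11 1) = zp_of_int 11 0"
    and "zp_sub 11 (zp_sub 11 (zp_pow 11 \<phi>' 2) \<phi>') (zp_of_int 11 1) = zp_of_int 11 0"
    and "i \<le> 9" and "i \<noteq> 5"
  shows "(\<forall>x\<in>Zp 11. \<exists>z. zp_sums 11 (fib_term 11 i \<phi> \<phi>' x) z)
       \<and> {z. \<exists>x\<in>Zp 11. zp_sums 11 (fib_term 11 i \<phi> \<phi>' x) z}
         = {z \<in> Zp 11. z 1 = int (fib i mod 11)}"
proof -
  interpret fs \<phi> \<phi>' i using assms by unfold_locales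
  show ?thesis by (rule main)
qed


end
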